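(* Let $X=(X,d,\mu)$ be a metric measure space with $\mu$ uniformly locally doubling. If a measure $\mathfrak m$ on $X$ is weakly noncollapsed, then $\mathfrak m$ has the uniformly weak asymptotically doubling property. Furthermore, for every $c>1$ and every $Q\in\operatorname{Q}_\mu(1)$, $\underline{C}_{\mathfrak m}(c)\le 2^{([c]+1)Q}$, where $[c]=\max\{k\in\mathbb Z:k\le c\}$.
   Context: A metric measure space is a triple $X=(X,d,\mu)$ with $(X,d)$ a complete separable metric space and $\mu$ a Borel regular measure with $0<\mu(B)<\infty$ for every ball $B$ and $\operatorname{supp}\mu=X$. All balls are closed: $B_r(x)=\{y:d(x,y)\le r\}$. A measure on $X$ means a nonzero Borel regular locally finite (outer) measure. $\mu$ is uniformly locally doubling if for every $R>0$, $\sup_{r\in(0,R]}\sup_{x}\mu(B_{2r}(x))/\mu(B_r(x))<\infty$. A measure $\mathfrak m$ is weakly noncollapsed if $\inf_{x\in\operatorname{supp}\mathfrak m}\liminf_{r\to0}\mathfrak m(B_r(x))/\mu(B_r(x))>0$. $\mathfrak m$ has the uniformly weak asymptotically doubling property if for every $c>0$, $\underline C_{\mathfrak m}(c):=\lim_{R\to0^+}\sup_{x\in\operatorname{supp}\mathfrak m}\inf_{r\in(0,R]}\mathfrak m(B_{cr}(x))/\mathfrak m(B_r(x))<\infty$. $\mu$ has relative lower volume decay of order $Q>0$ up to scale $R$ if there is $C(Q,R)>0$ such that $(r(B')/r(B))^Q\le C(Q,R)\mu(B')/\mu(B)$ for all closed balls $B'\subset B$ with $r(B)<R$; $\operatorname{Q}_\mu(R)$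 denotes the set of all such $Q$. *)

theory Defs
  imports "HOL-Analysis.Analysis"
begin

text \<open>The ambient space X is the whole type 'a, a complete separable metric space
  (class polish_space = complete metric space with second countable topology).\<close>

definition mms_measure :: "'a::polish_space measure \<Rightarrow> bool" where
  "mms_measure mu \<longleftrightarrow> sets mu = sets borel \<and>
     (\<forall>x r. r > 0 \<longrightarrow> 0 < emeasure mu (cball x r) \<and> emeasure mu (cball x r) < \<infinity>)"

definition unif_loc_doubling :: "'a::polish_space measure \<Rightarrow> bool" where
  "unif_loc_doubling mu \<longleftrightarrow>
     (\<forall>R>0. \<exists>C::real. \<forall>r\<in>{0<..R}. \<forall>x.
        measure mu (cball x (2*r)) \<le> C * measure mu (cball x r))"

definition measure_on :: "'a::polish_space measure \<Rightarrow> bool" where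
  "measure_on m \<longleftrightarrow> sets m = sets borel \<and> emeasure m (space m) \<noteq> 0 \<and>
     (\<forall>x. \<exists>r>0. emeasure m (cball x r) < \<infinity>)"

definition msupp :: "'a::metric_space measure \<Rightarrow> 'a set" where
  "msupp m = {x. \<forall>r>0. 0 < emeasure m (cball x r)}"

definition weakly_noncollapsed :: "'a::polish_space measure \<Rightarrow> 'a measure \<Rightarrow> bool" where
  "weakly_noncollapsed mu m \<longleftrightarrow>
     (INF x\<in>msupp m. Liminf (at_right 0)
        (\<lambda>r. emeasure m (cball x r) / emeasure mu (cball x r))) > 0"

text \<open>Ratio m(B_{cr}(x))/m(B_r(x)) in [0,\<infinity>]; the undefined case \<infinity>/\<infinity> is read as \<infinity>
  (the conservative convention: such radii do not help to make the infimum small).\<close>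
definition dratio :: "'a::metric_space measure \<Rightarrow> real \<Rightarrow> real \<Rightarrow> 'a \<Rightarrow> ennreal" where
  "dratio m c r x =
     (if emeasure m (cball x r) = \<infinity> \<and> emeasure m (cball x (c*r)) = \<infinity> then \<infinity>
      else emeasure m (cball x (c*r)) / emeasure m (cball x r))"

definition lowerC :: "'a::metric_space measure \<Rightarrow> real \<Rightarrow> ennreal" where
  "lowerC m c = Lim (at_right 0)
     (\<lambda>R::real. SUP x\<in>msupp m. INF r\<in>{0<..R}. dratio m c r x)"

definition unif_weak_asymp_doubling :: "'a::metric_space measure \<Rightarrow> bool" where
  "unif_weak_asymp_doubling m \<longleftrightarrow> (\<forall>c>0. lowerC m c < \<infinity>)"

definition Qset :: "'a::polish_space measure \<Rightarrow> real \<Rightarrow> real set" where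
  "Qset mu R = {Q. Q > 0 \<and> (\<exists>C>0. \<forall>x r x' r'. 0 < r' \<longrightarrow> 0 < r \<longrightarrow> r < R \<longrightarrow>
        cball x' r' \<subseteq> cball x r \<longrightarrow>
        (r'/r) powr Q \<le> C * measure mu (cball x' r') / measure mu (cball x r))}"

end

theory Submission
  imports Defs
begin

lemma Lim_le_aux:
  fixes f :: "real \<Rightarrow> ennreal"
  assumes mono: "\<And>a b. 0 < a \<Longrightarrow> a \<le> b \<Longrightarrow> f b \<le> f a"
    and bound: "\<And>R. 0 < R \<Longrightarrow> f R \<le> K"
  shows "Lim (at_right 0) f \<le> K"
proof -
  let ?l = "SUP R\<in>{0<..}. f R"
  have "(f \<longlongrightarrow> ?l) (at_right 0)"
  proof (rule increasing_tendsto)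
    show "\<forall>\<^sub>F n in at_right 0. f n \<le> ?l"
      unfolding eventually_at_right_field
      by (rule exI[of _ 1]) (auto intro: SUP_upper)
  next
    fix y assume "y < ?l"
    then obtain R1 where R1: "R1 > 0" "y < f R1" by (auto simp: less_SUP_iff)
    show "\<forall>\<^sub>F n in at_right 0. y < f n"
      unfolding eventually_at_right_field
      using R1 mono by (intro exI[of _ R1]) (auto intro: less_le_trans)
  qed
  then have "Lim (at_right 0) f = ?l"
    by (intro tendsto_Lim) (simp add: trivial_limit_at_right_real)
  also have "\<dots> \<le> K" using bound by (auto intro: SUP_least)
  finally show ?thesis .
qed

lemma mu_facts:
  assumes "mms_measure mu" "r > 0"
  shows "emeasure mu (cball x r) = ennreal (measure mu (cball x r))"
    and "measure mu (cball x r) > 0"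
proof -
  have h: "0 < emeasure mu (cball x r)" "emeasure mu (cball x r) < \<infinity>"
    using assms unfolding mms_measure_def by auto
  show "emeasure mu (cball x r) = ennreal (measure mu (cball x r))"
    using h by (simp add: emeasure_eq_ennreal_measure)
  show "measure mu (cball x r) > 0"
    using h by (simp add: measure_def enn2real_positive_iff)
qed

lemma mu_mono:
  assumes "mms_measure mu" "0 < s" "r \<le> s"
  shows "measure mu (cball x r) \<le> measure mu (cball x s)"
proof -
  have "emeasure mu (cball x r) \<le> emeasure mu (cball x s)"
    using assms unfolding mms_measure_def
    by (intro emeasure_mono) (auto simp: sets_eq_imp_space_eq)
  moreover have "emeasure mu (cball x s) < \<infinity>" using assms unfolding mms_measure_def by auto
  ultimately show ?thesis unfolding measure_def by (simp add: enn2real_mono)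
qed

lemma key:
  fixes mu m :: "'a::polish_space measure"
  assumes mu: "mms_measure mu" and mo: "measure_on m" and x: "x \<in> msupp m"
    and c: "c > 1" and K: "K > 0" and R: "R > 0"
    and lim: "Liminf (at_right 0) (\<lambda>r. emeasure m (cball x r) / emeasure mu (cball x r)) > 0"
    and rho0: "\<rho>0 > 0"
    and hyp: "\<And>R0. 0 < R0 \<Longrightarrow> R0 \<le> \<rho>0 \<Longrightarrow> \<exists>A>0. \<forall>k. A \<le> measure mu (cball x (R0 / c^k)) * K^k"
  shows "(INF r\<in>{0<..R}. dratio m c r x) \<le> ennreal K"
proof (rule ccontr)
  let ?I = "INF r\<in>{0<..R}. dratio m c r x"
  assume "\<not> ?I \<le> ennreal K"
  then have "ennreal K < ?I" by simp
  then obtain L' where L': "ennreal K < L'" "L' < ?I" using dense by blast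
  then have "L' \<noteq> \<infinity>" using top.not_eq_extremum by fastforce
  then obtain L where L: "L' = ennreal L" "L \<ge> 0" by (cases L') auto
  have KL: "K < L" using L L' K by (simp add: ennreal_less_iff)
  have gt: "ennreal L < dratio m c r x" if "r \<in> {0<..R}" for r
    using L L' that by (metis INF_lower less_le_trans)
  obtain y where y: "0 < y" "y < Liminf (at_right 0) (\<lambda>r. emeasure m (cball x r) / emeasure mu (cball x r))"
    using lim dense by blast
  then have "y \<noteq> \<infinity>" using top.not_eq_extremum by fastforce
  then obtain \<kappa> where ka: "y = ennreal \<kappa>" "\<kappa> \<ge> 0" by (cases y) auto
  with y have kpos: "\<kappa> > 0" by simp
  have "\<forall>\<^sub>F r in at_right 0. ennreal \<kappa> < emeasure m (cball x r) / emeasure mu (cball x r)"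
    using less_LiminfD[OF y(2)] ka by simp
  then obtain b where b: "b > 0" and hb: "\<And>r. 0 < r \<Longrightarrow> r < b \<Longrightarrow>
      ennreal \<kappa> < emeasure m (cball x r) / emeasure mu (cball x r)"
    unfolding eventually_at_right_field by auto
  obtain rf where rf: "rf > 0" "emeasure m (cball x rf) < \<infinity>"
    using mo unfolding measure_on_def by auto
  define R0 where "R0 = min (min R \<rho>0) (min (b/2) rf)"
  have R0: "R0 > 0" "R0 \<le> R" "R0 \<le> \<rho>0" "R0 < b" "R0 \<le> rf"
    using R rho0 b rf unfolding R0_def by auto
  obtain A where A: "A > 0" "\<And>k. A \<le> measure mu (cball x (R0 / c^k)) * K^k"
    using hyp[OF R0(1) R0(3)] by blast
  define M where "M k = measure m (cball x (R0 / c^k))" for k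
  define N where "N k = measure mu (cball x (R0 / c^k))" for k
  have rk: "0 < R0 / c^k" "R0 / c^k \<le> R0" for k :: nat
    using R0 c by (auto simp: field_simps)
  have msets: "sets m = sets borel" using mo unfolding measure_on_def by auto
  have mfin: "emeasure m (cball x (R0 / c^k)) < \<infinity>" for k
  proof -
    have "emeasure m (cball x (R0 / c^k)) \<le> emeasure m (cball x rf)"
      using msets rk[of k] R0 by (intro emeasure_mono) (auto simp: sets_eq_imp_space_eq)
    then show ?thesis using rf by auto
  qed
  have mpos: "emeasure m (cball x (R0 / c^k)) > 0" for k
    using x rk[of k] unfolding msupp_def by auto
  have Meq: "emeasure m (cball x (R0 / c^k)) = ennreal (M k)" for k
    using mfin[of k] unfolding M_def by (simp add: emeasure_eq_ennreal_measure)
  have Mpos: "M k > 0" for k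
    using mfin[of k] mpos[of k] unfolding M_def by (simp add: measure_def enn2real_positive_iff)
  have Neq: "emeasure mu (cball x (R0 / c^k)) = ennreal (N k)"
   and Npos: "N k > 0" for k
    using mu_facts[OF mu rk(1)[of k]] unfolding N_def by auto
  have step: "L * M (Suc k) < M k" for k
  proof -
    have r: "R0 / c ^ Suc k \<in> {0<..R}" using rk[of "Suc k"] R0 by auto
    have cr: "c * (R0 / c ^ Suc k) = R0 / c^k" using c by (simp add: field_simps)
    have "dratio m c (R0 / c ^ Suc k) x = ennreal (M k) / ennreal (M (Suc k))"
      unfolding dratio_def cr using Meq[of k] Meq[of "Suc k"] by (simp del: power_Suc)
    also have "\<dots> = ennreal (M k / M (Suc k))"
      using Mpos by (intro divide_ennreal) (auto intro: less_imp_le)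
    finally have "ennreal L < ennreal (M k / M (Suc k))" using gt[OF r] by simp
    moreover have "0 \<le> M k / M (Suc k)" using Mpos[of k] Mpos[of "Suc k"] by simp
    ultimately have "L < M k / M (Suc k)" using L(2) by (simp add: ennreal_less_iff)
    then show ?thesis using Mpos[of "Suc k"] by (simp add: field_simps)
  qed
  have Lpos: "L > 0" using KL K by simp
  have decay: "M k * L^k \<le> M 0" for k
  proof (induction k)
    case 0 then show ?case by simp
  next
    case (Suc k)
    have "M (Suc k) * L ^ Suc k = (L * M (Suc k)) * L^k" by simp
    also have "\<dots> \<le> M k * L^k" using step[of k] Lpos
      by (intro mult_right_mono) auto
    finally show ?case using Suc by simp
  qed
  have lower: "\<kappa> * N k < M k" for k
  proof -
    have "ennreal \<kappa> < emeasure m (cball x (R0 / c^k)) / emeasure mu (cball x (R0 / c^k))"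
      using hb[of "R0 / c^k"] rk[of k] R0 by auto
    also have "\<dots> = ennreal (M k / N k)" using Meq Neq Npos Mpos
      by (simp add: divide_ennreal less_imp_le)
    moreover have "0 \<le> M k / N k" using Mpos[of k] Npos[of k] by simp
    ultimately have "\<kappa> < M k / N k" using ka(2) by (simp add: ennreal_less_iff)
    then show ?thesis using Npos[of k] by (simp add: field_simps)
  qed
  have bnd: "\<kappa> * A * (L / K)^k \<le> M 0" for k
  proof -
    have "\<kappa> * A * L^k \<le> \<kappa> * (N k * K^k) * L^k"
      using A(2)[of k] kpos Lpos unfolding N_def by (intro mult_right_mono mult_left_mono) auto
    also have "\<dots> = (\<kappa> * N k) * L^k * K^k" by (simp add: algebra_simps)
    also have "\<dots> \<le> M k * L^k * K^k"
      using lower[of k] Lpos K by (intro mult_right_mono) auto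
    also have "\<dots> \<le> M 0 * K^k" using decay[of k] K by (intro mult_right_mono) auto
    finally have "\<kappa> * A * L^k \<le> M 0 * K^k" .
    then show ?thesis using K by (simp add: power_divide field_simps)
  qed
  have "1 < L / K" using KL K by simp
  then obtain n where "M 0 / (\<kappa> * A) < (L / K)^n" using real_arch_pow by blast
  then have "M 0 < \<kappa> * A * (L / K)^n" using kpos A by (simp add: field_simps)
  then show False using bnd[of n] by simp
qed

lemma lowerC_le:
  assumes "\<And>R x. 0 < R \<Longrightarrow> x \<in> msupp m \<Longrightarrow> (INF r\<in>{0<..R}. dratio m c r x) \<le> K"
  shows "lowerC m c \<le> K"
  unfolding lowerC_def
proof (rule Lim_le_aux)
  fix a b :: real assume "0 < a" "a \<le> b"
  then show "(SUP x\<in>msupp m. INF r\<in>{0<..b}. dratio m c r x) \<le> (SUP x\<in>msupp m. INF r\<in>{0<..a}. dratio m c r x)"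
  proof (intro SUP_mono bexI)
    fix x assume "x \<in> msupp m"
    then show "x \<in> msupp m" .
    show "(INF r\<in>{0<..b}. dratio m c r x) \<le> (INF r\<in>{0<..a}. dratio m c r x)"
      using \<open>a \<le> b\<close> by (intro INF_superset_mono) auto
  qed
next
  fix R :: real assume "0 < R"
  then show "(SUP x\<in>msupp m. INF r\<in>{0<..R}. dratio m c r x) \<le> K"
    using assms by (auto intro: SUP_least)
qed

lemma small_c:
  fixes m :: "'a::polish_space measure"
  assumes mo: "measure_on m" and x: "x \<in> msupp m" and c: "0 < c" "c \<le> 1" and R: "R > 0"
  shows "(INF r\<in>{0<..R}. dratio m c r x) \<le> 1"
proof -
  obtain rf where rf: "rf > 0" "emeasure m (cball x rf) < \<infinity>"
    using mo unfolding measure_on_def by auto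
  define r where "r = min R rf"
  have r: "r \<in> {0<..R}" "r \<le> rf" using R rf unfolding r_def by auto
  have msets: "sets m = sets borel" using mo unfolding measure_on_def by auto
  have fin: "emeasure m (cball x r) < \<infinity>"
  proof -
    have "emeasure m (cball x r) \<le> emeasure m (cball x rf)"
      using msets r by (intro emeasure_mono) (auto simp: sets_eq_imp_space_eq)
    then show ?thesis using rf by auto
  qed
  have pos: "emeasure m (cball x r) > 0" using x r unfolding msupp_def by auto
  have le: "emeasure m (cball x (c*r)) \<le> emeasure m (cball x r)"
  proof -
    have "c * r \<le> r" using c r by (intro mult_left_le_one_le) auto
    then have sub: "cball x (c*r) \<subseteq> cball x r" by (auto simp: subset_iff)
    show ?thesis
      using msets sub by (intro emeasure_mono) (auto simp: sets_eq_imp_space_eq)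
  qed
  have "dratio m c r x \<le> 1"
  proof -
    have "emeasure m (cball x (c*r)) / emeasure m (cball x r) \<le> emeasure m (cball x r) / emeasure m (cball x r)"
      by (rule divide_right_mono_ennreal[OF le])
    also have "\<dots> = 1" using fin pos by (intro ennreal_divide_self) auto
    finally show ?thesis unfolding dratio_def using fin by auto
  qed
  then show ?thesis using r by (meson INF_lower order_trans)
qed

theorem mainTheorem5:
  fixes mu m :: "'a::polish_space measure"
  assumes "mms_measure mu" and "unif_loc_doubling mu"
    and "measure_on m" and "weakly_noncollapsed mu m"
  shows "unif_weak_asymp_doubling m \<and>
         (\<forall>c>1. \<forall>Q\<in>Qset mu 1.
           lowerC m c \<le> ennreal (2 powr ((real_of_int \<lfloor>c\<rfloor> + 1) * Q)))"
proof -
  note mu = assms(1) and mo = assms(3)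
  have lim: "Liminf (at_right 0) (\<lambda>r. emeasure m (cball x r) / emeasure mu (cball x r)) > 0"
    if "x \<in> msupp m" for x
    using assms(4) that unfolding weakly_noncollapsed_def by (meson INF_lower less_le_trans)
  have part2: "lowerC m c \<le> ennreal (2 powr ((real_of_int \<lfloor>c\<rfloor> + 1) * Q))"
    if c: "c > 1" and Q: "Q \<in> Qset mu 1" for c Q
  proof -
    obtain C where C: "C > 0" "Q > 0" and HC: "\<And>x r x' r'. 0 < r' \<Longrightarrow> 0 < r \<Longrightarrow> r < 1 \<Longrightarrow>
        cball x' r' \<subseteq> cball x r \<Longrightarrow>
        (r'/r) powr Q \<le> C * measure mu (cball x' r') / measure mu (cball x r)"
      using Q unfolding Qset_def by blast
    define K where "K = c powr Q"
    have Kpos: "K > 0" using c unfolding K_def by simp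
    have "lowerC m c \<le> ennreal K"
    proof (rule lowerC_le)
      fix R :: real and x assume R: "0 < R" and x: "x \<in> msupp m"
      show "(INF r\<in>{0<..R}. dratio m c r x) \<le> ennreal K"
      proof (rule key[OF mu mo x c Kpos R lim[OF x], of "1/2"])
        fix R0 :: real assume R0: "0 < R0" "R0 \<le> 1/2"
        show "\<exists>A>0. \<forall>k. A \<le> measure mu (cball x (R0 / c^k)) * K^k"
        proof (intro exI[of _ "measure mu (cball x R0) / C"] conjI allI)
          show "0 < measure mu (cball x R0) / C" using mu_facts[OF mu R0(1)] C by simp
        next
          fix k :: nat
          have rk: "0 < R0 / c^k" "R0 / c^k \<le> R0" using R0 c by (auto simp: field_simps)
          have h: "(R0 / c^k / R0) powr Q \<le> C * measure mu (cball x (R0 / c^k)) / measure mu (cball x R0)"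
            using rk R0 by (intro HC) auto
          have e: "(R0 / c^k / R0) powr Q = 1 / K^k"
          proof -
            have "(R0 / c^k / R0) powr Q = 1 / (c^k) powr Q" using R0 c by (simp add: powr_divide)
            also have "(c^k) powr Q = K^k"
            proof -
              have "(c^k) powr Q = (c powr real k) powr Q" using c by (simp add: powr_realpow)
              also have "\<dots> = (c powr Q) powr real k" by (simp add: powr_powr mult.commute)
              also have "\<dots> = (c powr Q)^k" using c by (simp add: powr_realpow)
              finally show ?thesis unfolding K_def .
            qed
            finally show ?thesis .
          qed
          have N0: "measure mu (cball x R0) > 0" using mu_facts[OF mu R0(1)] by simp
          from h e have "1 / K^k \<le> C * measure mu (cball x (R0 / c^k)) / measure mu (cball x R0)" by simp
          then show "measure mu (cball x R0) / C \<le> measure mu (cball x (R0 / c ^ k)) * K ^ k"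
            using N0 C Kpos by (simp add: field_simps)
        qed
      qed simp
    qed
    also have "ennreal K \<le> ennreal (2 powr ((real_of_int \<lfloor>c\<rfloor> + 1) * Q))"
    proof (rule ennreal_leI)
      have fl: "c < real_of_int \<lfloor>c\<rfloor> + 1" by linarith
      have n: "\<lfloor>c\<rfloor> + 1 \<ge> 2" using c by linarith
      define n where "n = nat (\<lfloor>c\<rfloor> + 1)"
      have nn: "real n = real_of_int \<lfloor>c\<rfloor> + 1" using n unfolding n_def by simp
      have pw: "real k < 2 ^ k" for k :: nat
      proof (induction k)
        case (Suc k)
        have "1 + real k < 2 * 2^k" using Suc one_le_power[of "2::real" k] by linarith
        then show ?case by simp
      qed simp
      have "real n < 2 ^ n" by (rule pw)
      moreover have "2 powr (real_of_int \<lfloor>c\<rfloor> + 1) = 2^n" using nn[symmetric] by (simp add: powr_realpow)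
      ultimately have "c \<le> 2 powr (real_of_int \<lfloor>c\<rfloor> + 1)"
        using fl nn by linarith
      then have "c powr Q \<le> (2 powr (real_of_int \<lfloor>c\<rfloor> + 1)) powr Q"
        using c C by (intro powr_mono2) auto
      then show "K \<le> 2 powr ((real_of_int \<lfloor>c\<rfloor> + 1) * Q)" unfolding K_def by (simp add: powr_powr)
    qed
    finally show ?thesis .
  qed
  have part1: "lowerC m c < \<infinity>" if c0: "c > 0" for c
  proof (cases "c \<le> 1")
    case True
    have "lowerC m c \<le> 1"
      by (rule lowerC_le, rule small_c[OF mo _ c0 True]) auto
    then show ?thesis by (simp add: le_less_trans)
  next
    case False
    then have c: "c > 1" by simp
    obtain n where n: "c < 2^n" using real_arch_pow[of 2 c] by auto
    obtain C where HC: "\<And>r x. r \<in> {0<..2^n} \<Longrightarrow> measure mu (cball x (2*r)) \<le> C * measure mu (cball x r)"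
    proof -
      have "(2::real)^n > 0" by simp
      then show ?thesis using that assms(2) unfolding unif_loc_doubling_def by blast
    qed
    have Cpos: "C > 0"
    proof -
      fix x :: 'a
      have "measure mu (cball x (2*1)) \<le> C * measure mu (cball x 1)" by (intro HC) auto
      moreover have "measure mu (cball x 2) > 0" "measure mu (cball x 1) > 0"
        using mu_facts[OF mu] by auto
      ultimately show ?thesis
      proof (rule_tac ccontr)
        assume a: "measure mu (cball x (2*1)) \<le> C * measure mu (cball x 1)"
          "measure mu (cball x 2) > 0" "measure mu (cball x 1) > 0" "\<not> C > 0"
        then have "C * measure mu (cball x 1) \<le> 0" by (intro mult_nonpos_nonneg) auto
        then show False using a by simp
      qed
    qed
    define K where "K = C^n"
    have Kpos: "K > 0" using Cpos unfolding K_def by simp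
    have doub: "measure mu (cball x (c*\<rho>)) \<le> K * measure mu (cball x \<rho>)"
      if rho: "0 < \<rho>" "\<rho> \<le> 1" for x \<rho>
    proof -
      have "j \<le> n \<Longrightarrow> measure mu (cball x (2^j*\<rho>)) \<le> C^j * measure mu (cball x \<rho>)" for j
      proof (induction j)
        case 0 then show ?case by simp
      next
        case (Suc j)
        have "2^j * \<rho> \<le> 2^j * 1" using rho by (intro mult_left_mono) auto
        also have "(2::real)^j \<le> 2^n" using Suc.prems by (intro power_increasing) auto
        finally have r: "2^j * \<rho> \<in> {0<..2^n}" using rho by auto
        have "measure mu (cball x (2^Suc j*\<rho>)) = measure mu (cball x (2*(2^j*\<rho>)))" by (simp add: mult.assoc)
        also have "\<dots> \<le> C * measure mu (cball x (2^j*\<rho>))" by (rule HC[OF r])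
        also have "\<dots> \<le> C * (C^j * measure mu (cball x \<rho>))"
          using Suc Cpos by (intro mult_left_mono) auto
        finally show ?case by simp
      qed
      then have "measure mu (cball x (2^n*\<rho>)) \<le> K * measure mu (cball x \<rho>)"
        unfolding K_def by simp
      moreover have "measure mu (cball x (c*\<rho>)) \<le> measure mu (cball x (2^n*\<rho>))"
        using n rho by (intro mu_mono[OF mu]) auto
      ultimately show ?thesis by simp
    qed
    have "lowerC m c \<le> ennreal K"
    proof (rule lowerC_le)
      fix R :: real and x assume R: "0 < R" and x: "x \<in> msupp m"
      show "(INF r\<in>{0<..R}. dratio m c r x) \<le> ennreal K"
      proof (rule key[OF mu mo x c Kpos R lim[OF x], of 1])
        fix R0 :: real assume R0: "0 < R0" "R0 \<le> 1"
        show "\<exists>A>0. \<forall>k. A \<le> measure mu (cball x (R0 / c^k)) * K^k"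
        proof (intro exI[of _ "measure mu (cball x R0)"] conjI allI)
          show "0 < measure mu (cball x R0)" using mu_facts[OF mu R0(1)] by simp
        next
          fix k :: nat
          show "measure mu (cball x R0) \<le> measure mu (cball x (R0 / c^k)) * K^k"
          proof (induction k)
            case 0 then show ?case by simp
          next
            case (Suc k)
            have "1 \<le> c^Suc k" using c by (intro one_le_power) auto
            then have "R0 / c^Suc k \<le> R0 / 1" using R0 by (intro divide_left_mono) auto
            then have le: "R0 / c^Suc k \<le> R0" by (simp only: div_by_1)
            have p: "0 < c^Suc k" using c by (intro zero_less_power) auto
            have "0 < R0 / c^Suc k" using R0 p by (intro divide_pos_pos)
            then have rk: "0 < R0 / c^Suc k" "R0 / c^Suc k \<le> 1" using le R0 by linarith+
            have cr: "c * (R0 / c ^ Suc k) = R0 / c^k" using c by (simp add: field_simps)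
            have "measure mu (cball x (R0 / c^k)) \<le> K * measure mu (cball x (R0 / c^Suc k))"
              using doub[OF rk] cr by simp
            then have "measure mu (cball x (R0 / c^k)) * K^k \<le> measure mu (cball x (R0 / c^Suc k)) * K^Suc k"
            proof -
              have "measure mu (cball x (R0 / c^k)) * K^k \<le> (K * measure mu (cball x (R0 / c^Suc k))) * K^k"
                using \<open>measure mu (cball x (R0 / c^k)) \<le> K * measure mu (cball x (R0 / c^Suc k))\<close> Kpos
                by (intro mult_right_mono) auto
              then show ?thesis by (simp add: algebra_simps)
            qed
            then show ?case using Suc by simp
          qed
        qed
      qed simp
    qed
    then show ?thesis using le_less_trans by fastforce
  qed
  show ?thesis unfolding unif_weak_asymp_doubling_def using part1 part2 by blast
qed

end
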